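(* Let $\mathcal{P}$ be a finite set of propositional variables, let $S \subset (2^{\mathcal{P}})^\ast \times \{0,1\}$ be a finite sample in which no trace carries both labels, let $\Omega$ assign a positive real weight to each trace of $S$ with $\sum_{(u,b)\in S}\Omega(u)=1$, and let $\kappa\in[0,1]$. Consider the procedure (Algorithm 1) that, for $n=1,2,3,\dots$ in increasing order, computes an $\mathrm{LTL}_f$ formula $\varphi_n$ of size $n$ that minimizes the weighted loss $wl(S,\varphi,\Omega)$ among all $\mathrm{LTL}_f$ formulas $\varphi$ of size $n$, and returns the first $\varphi_n$ with $wl(S,\varphi_n,\Omega)\le\kappa$. Then this procedure terminates, and the returned formula $\varphi$ satisfies $wl(S,\varphi,\Omega)\le\kappa$ and is of minimal size among all $\mathrm{LTL}_f$ formulas $\psi$ with $wl(S,\psi,\Omega)\le\kappa$.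
   Context: A trace over $\mathcal{P}$ is a finite sequence $u=a_0a_1\dots a_m$ with $a_i\in 2^{\mathcal{P}}$. $\mathrm{LTL}_f$ formulas are built from propositions $p\in\mathcal{P}$ with the operators $\neg,\lor,\land,\rightarrow$, $\mathbf{X}$ (next), $\mathbf{U}$ (until), $\mathbf{F}$ (eventually, $\mathbf{F}\varphi=\mathit{true}\,\mathbf{U}\,\varphi$) and $\mathbf{G}$ (globally, $\mathbf{G}\varphi=\neg\mathbf{F}\neg\varphi$), interpreted over finite traces with the standard finite-trace semantics of De Giacomo and Vardi; $V(\varphi,u)\in\{0,1\}$ denotes whether trace $u$ satisfies $\varphi$ at position $0$. The size $|\varphi|$ of a formula is the number of its distinct subformulas. A sample is a finite set of pairs $(u,b)$ with $u$ a trace and $b\in\{0,1\}$ its label. The weighted loss is $wl(S,\varphi,\Omega)=\sum_{(u,b)\in S}\Omega(u)\,|V(\varphi,u)-b|$. *)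

theory Defs
  imports Complex_Main
begin

text \<open>LTLf formulas over propositions of type 'p (the finite set of propositional
variables is the universe of a finite type 'p).\<close>

datatype 'p ltlf =
    Prop 'p
  | Not "'p ltlf"
  | Or "'p ltlf" "'p ltlf"
  | And "'p ltlf" "'p ltlf"
  | Imp "'p ltlf" "'p ltlf"
  | Next "'p ltlf"
  | Until "'p ltlf" "'p ltlf"
  | Eventually "'p ltlf"
  | Globally "'p ltlf"

fun sat :: "'p set list \<Rightarrow> nat \<Rightarrow> 'p ltlf \<Rightarrow> bool" where
  "sat u i (Prop p) = (i < length u \<and> p \<in> u ! i)"
| "sat u i (Not f) = (\<not> sat u i f)"
| "sat u i (Or f g) = (sat u i f \<or> sat u i g)"
| "sat u i (And f g) = (sat u i f \<and> sat u i g)"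
| "sat u i (Imp f g) = (sat u i f \<longrightarrow> sat u i g)"
| "sat u i (Next f) = (i + 1 < length u \<and> sat u (i + 1) f)"
| "sat u i (Until f g) =
     (\<exists>j. i \<le> j \<and> j < length u \<and> sat u j g \<and> (\<forall>k. i \<le> k \<and> k < j \<longrightarrow> sat u k f))"
| "sat u i (Eventually f) = (\<exists>j. i \<le> j \<and> j < length u \<and> sat u j f)"
| "sat u i (Globally f) = (\<forall>j. i \<le> j \<and> j < length u \<longrightarrow> sat u j f)"

definition V :: "'p ltlf \<Rightarrow> 'p set list \<Rightarrow> real" where
  "V f u = (if sat u 0 f then 1 else 0)"

fun subformulas :: "'p ltlf \<Rightarrow> 'p ltlf set" where
  "subformulas (Prop p) = {Prop p}"
| "subformulas (Not f) = insert (Not f) (subformulas f)"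
| "subformulas (Or f g) = insert (Or f g) (subformulas f \<union> subformulas g)"
| "subformulas (And f g) = insert (And f g) (subformulas f \<union> subformulas g)"
| "subformulas (Imp f g) = insert (Imp f g) (subformulas f \<union> subformulas g)"
| "subformulas (Next f) = insert (Next f) (subformulas f)"
| "subformulas (Until f g) = insert (Until f g) (subformulas f \<union> subformulas g)"
| "subformulas (Eventually f) = insert (Eventually f) (subformulas f)"
| "subformulas (Globally f) = insert (Globally f) (subformulas f)"

definition fsize :: "'p ltlf \<Rightarrow> nat" where
  "fsize f = card (subformulas f)"

text \<open>Weighted loss; labels b are naturals in {0,1}.\<close>
definition wl :: "('p set list \<times> nat) set \<Rightarrow> 'p ltlf \<Rightarrow> ('p set list \<Rightarrow> real) \<Rightarrow> real" where
  "wl S f \<Omega> = (\<Sum>(u, b)\<in>S. \<Omega> u * \<bar>V f u - real b\<bar>)"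

text \<open>Specification of line "compute phi_n of size n minimizing wl among formulas of size n"
of Algorithm 1: a sequence phi is a valid run if each phi n (n \<ge> 1) is such a minimizer.\<close>
definition valid_run :: "('p set list \<times> nat) set \<Rightarrow> ('p set list \<Rightarrow> real) \<Rightarrow> (nat \<Rightarrow> 'p ltlf) \<Rightarrow> bool" where
  "valid_run S \<Omega> phi \<longleftrightarrow>
     (\<forall>n\<ge>1. fsize (phi n) = n \<and> (\<forall>\<psi>. fsize \<psi> = n \<longrightarrow> wl S (phi n) \<Omega> \<le> wl S \<psi> \<Omega>))"

text \<open>The index at which Algorithm 1 returns: the first n \<ge> 1 with wl(phi n) \<le> kappa.\<close>
definition stop_index :: "('p set list \<times> nat) set \<Rightarrow> ('p set list \<Rightarrow> real) \<Rightarrow> real \<Rightarrow> (nat \<Rightarrow> 'p ltlf) \<Rightarrow> nat" where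
  "stop_index S \<Omega> \<kappa> phi = (LEAST n. n \<ge> 1 \<and> wl S (phi n) \<Omega> \<le> \<kappa>)"

end

theory Submission
  imports Defs
begin

definition tt :: "'p ltlf" where "tt = Or (Prop undefined) (Not (Prop undefined))"

lemma sat_tt[simp]: "sat u i tt"
  by (simp add: tt_def)

lemma sat_nexts: "sat u i ((Next ^^ k) f) = (if k = 0 then sat u i f else i + k < length u \<and> sat u (i + k) f)"
proof (induction k arbitrary: i)
  case 0 then show ?case by simp
next
  case (Suc k) then show ?case by (auto simp: add.commute add.left_commute)
qed

lemma distinguish:
  assumes "u \<noteq> v" "u \<noteq> []" "v \<noteq> []"
  shows "\<exists>f. sat u 0 f \<and> \<not> sat v 0 f"
proof (cases "length u = length v")
  case True
  then obtain j where j: "j < length u" "u ! j \<noteq> v ! j"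
    using assms(1) nth_equalityI by blast
  show ?thesis
  proof (cases "\<exists>p. p \<in> u ! j \<and> p \<notin> v ! j")
    case True
    then obtain p where "p \<in> u ! j" "p \<notin> v ! j" by blast
    then show ?thesis using j True
      by (intro exI[of _ "(Next ^^ j) (Prop p)"]) (auto simp: sat_nexts)
  next
    case False
    then obtain p where "p \<notin> u ! j" "p \<in> v ! j" using j by blast
    then show ?thesis using j \<open>length u = length v\<close>
      by (intro exI[of _ "Not ((Next ^^ j) (Prop p))"]) (auto simp: sat_nexts)
  qed
next
  case False
  show ?thesis
  proof (cases "length v < length u")
    case True
    have "length v > 0" using assms by simp
    then have "length u \<ge> 2" using True by linarith
    then show ?thesis using assms True
      by (intro exI[of _ "(Next ^^ (length u - 1)) tt"]) (auto simp: sat_nexts)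
  next
    case F: False
    then have "length u < length v" using False by simp
    moreover have "length u > 0" using assms by simp
    ultimately have "length v \<ge> 2" by linarith
    then show ?thesis using assms \<open>length u < length v\<close>
      by (intro exI[of _ "Not ((Next ^^ (length v - 1)) tt)"]) (auto simp: sat_nexts)
  qed
qed

lemma char_exists:
  assumes "finite T" "\<forall>v\<in>T. v \<noteq> []" "u \<noteq> []" "u \<notin> T"
  shows "\<exists>f. sat u 0 f \<and> (\<forall>v\<in>T. \<not> sat v 0 f)"
  using assms
proof (induction T rule: finite_induct)
  case empty then show ?case by (intro exI[of _ tt]) simp
next
  case (insert v T)
  then obtain f where f: "sat u 0 f" "\<forall>w\<in>T. \<not> sat w 0 f" by auto
  obtain g where g: "sat u 0 g" "\<not> sat v 0 g"
    using distinguish[of u v] insert.prems by auto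
  show ?case using f g by (intro exI[of _ "And f g"]) auto
qed

lemma classifier_exists:
  assumes "finite P" "finite N" "P \<inter> N = {}" "\<forall>v\<in>P \<union> N. v \<noteq> []"
  shows "\<exists>f. (\<forall>u\<in>P. sat u 0 f) \<and> (\<forall>v\<in>N. \<not> sat v 0 f)"
  using assms
proof (induction P rule: finite_induct)
  case empty then show ?case by (intro exI[of _ "Not tt"]) simp
next
  case (insert u P)
  then obtain f where f: "\<forall>w\<in>P. sat w 0 f" "\<forall>w\<in>N. \<not> sat w 0 f" by auto
  obtain g where g: "sat u 0 g" "\<forall>w\<in>N. \<not> sat w 0 g"
    using char_exists[of N u] insert.prems by auto
  show ?case using f g by (intro exI[of _ "Or f g"]) auto
qed

lemma subformulas_size: "x \<in> subformulas g \<Longrightarrow> size x \<le> size g"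
  by (induction g) auto

lemma self_subformula: "g \<in> subformulas g"
  by (cases g) auto

lemma finite_subformulas: "finite (subformulas g)"
  by (induction g) auto

lemma fsize_pos: "fsize g \<ge> 1"
  unfolding fsize_def using self_subformula finite_subformulas
  by (metis One_nat_def Suc_leI card_gt_0_iff empty_iff)

lemma fsize_nexts: "card (subformulas ((Next ^^ k) f)) = k + card (subformulas f)"
proof (induction k)
  case 0 then show ?case by simp
next
  case (Suc k)
  have "Next ((Next ^^ k) f) \<notin> subformulas ((Next ^^ k) f)"
    using subformulas_size by fastforce
  then have "card (insert (Next ((Next ^^ k) f)) (subformulas ((Next ^^ k) f))) = Suc (card (subformulas ((Next ^^ k) f)))"
    using finite_subformulas by (rule_tac card_insert_disjoint) auto
  then show ?case using Suc by simp
qed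

lemma exists_size: "n \<ge> 1 \<Longrightarrow> \<exists>f::'p ltlf. fsize f = n"
  by (rule exI[of _ "(Next ^^ (n - 1)) (Prop undefined)"]) (simp add: fsize_def fsize_nexts)

lemma wl_finite: "finite {wl S \<psi> \<Omega> | \<psi>. P \<psi>}" if "finite S"
proof -
  have "{wl S \<psi> \<Omega> | \<psi>. P \<psi>} \<subseteq>
     (\<lambda>T. \<Sum>x\<in>S. \<Omega> (fst x) * \<bar>(if x \<in> T then 1 else 0) - real (snd x)\<bar>) ` Pow S"
  proof
    fix w assume "w \<in> {wl S \<psi> \<Omega> | \<psi>. P \<psi>}"
    then obtain \<psi> where w: "w = wl S \<psi> \<Omega>" by blast
    have "w = (\<Sum>x\<in>S. \<Omega> (fst x) * \<bar>(if x \<in> {x\<in>S. sat (fst x) 0 \<psi>} then 1 else 0) - real (snd x)\<bar>)"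
      unfolding w wl_def V_def by (intro sum.cong) auto
    then show "w \<in> (\<lambda>T. \<Sum>x\<in>S. \<Omega> (fst x) * \<bar>(if x \<in> T then 1 else 0) - real (snd x)\<bar>) ` Pow S"
      by blast
  qed
  then show ?thesis by (rule finite_subset) (simp add: that)
qed

lemma minimizer_exists:
  assumes "finite S" "n \<ge> 1"
  shows "\<exists>f::'p ltlf. fsize f = n \<and> (\<forall>\<psi>. fsize \<psi> = n \<longrightarrow> wl S f \<Omega> \<le> wl S \<psi> \<Omega>)"
proof -
  let ?W = "{wl S \<psi> \<Omega> | \<psi>::'p ltlf. fsize \<psi> = n}"
  have fin: "finite ?W" using wl_finite[OF assms(1)] .
  have ne: "?W \<noteq> {}" using exists_size[OF assms(2)] by blast
  have "Min ?W \<in> ?W" using Min_in[OF fin ne] .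
  then obtain f where f: "fsize f = n" "wl S f \<Omega> = Min ?W" by auto
  show ?thesis
  proof (intro exI[of _ f] conjI allI impI)
    fix \<psi> :: "'p ltlf" assume "fsize \<psi> = n"
    then show "wl S f \<Omega> \<le> wl S \<psi> \<Omega>" unfolding f(2) using fin by (intro Min_le) auto
  qed (rule f(1))
qed

theorem theorem1:
  fixes S :: "('p::finite set list \<times> nat) set"
    and \<Omega> :: "'p set list \<Rightarrow> real"
    and \<kappa> :: real
  assumes "finite S"
    and "\<forall>(u, b)\<in>S. u \<noteq> [] \<and> b \<in> {0, 1}"
    and "\<forall>u. \<not> ((u, 0) \<in> S \<and> (u, 1) \<in> S)"
    and "\<forall>(u, b)\<in>S. \<Omega> u > 0"
    and "(\<Sum>(u, b)\<in>S. \<Omega> u) = 1"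
    and "0 \<le> \<kappa>" and "\<kappa> \<le> 1"
  shows "(\<exists>phi. valid_run S \<Omega> phi) \<and>
         (\<forall>phi. valid_run S \<Omega> phi \<longrightarrow>
            (\<exists>n\<ge>1. wl S (phi n) \<Omega> \<le> \<kappa>) \<and>
            wl S (phi (stop_index S \<Omega> \<kappa> phi)) \<Omega> \<le> \<kappa> \<and>
            (\<forall>\<psi>. wl S \<psi> \<Omega> \<le> \<kappa> \<longrightarrow> fsize (phi (stop_index S \<Omega> \<kappa> phi)) \<le> fsize \<psi>))"
proof -
  have "\<forall>n. \<exists>f. n \<ge> 1 \<longrightarrow> fsize f = n \<and> (\<forall>\<psi>. fsize \<psi> = n \<longrightarrow> wl S f \<Omega> \<le> wl S \<psi> \<Omega>)"
    using minimizer_exists[OF assms(1)] by blast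
  from choice[OF this] obtain phi0 where H: "\<forall>n. 1 \<le> n \<longrightarrow> fsize (phi0 n) = n \<and> (\<forall>\<psi>. fsize \<psi> = n \<longrightarrow> wl S (phi0 n) \<Omega> \<le> wl S \<psi> \<Omega>)" ..
  have "valid_run S \<Omega> phi0" unfolding valid_run_def using H by simp
  then have part1: "\<exists>phi. valid_run S \<Omega> phi" by (rule exI[of _ phi0])
  let ?P = "{u. (u, 1) \<in> S}" and ?N = "{u. (u, 0) \<in> S}"
  have sP: "?P \<subseteq> fst ` S" by (auto intro: rev_image_eqI)
  have sN: "?N \<subseteq> fst ` S" by (auto intro: rev_image_eqI)
  have finP: "finite ?P" using finite_subset[OF sP] assms(1) by simp
  have finN: "finite ?N" using finite_subset[OF sN] assms(1) by simp
  have disj: "?P \<inter> ?N = {}" using assms(3) by auto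
  have ne: "\<forall>v\<in>?P \<union> ?N. v \<noteq> []" using assms(2) by auto
  obtain f0 where f0: "\<forall>u\<in>?P. sat u 0 f0" "\<forall>v\<in>?N. \<not> sat v 0 f0"
    using classifier_exists[OF finP finN disj ne] by auto
  have "wl S f0 \<Omega> = 0"
    unfolding wl_def
  proof (intro sum.neutral ballI)
    fix x assume x: "x \<in> S"
    obtain u b where ub: "x = (u, b)" by force
    have "b = 0 \<or> b = 1" using assms(2) x ub by auto
    then show "(case x of (u, b) \<Rightarrow> \<Omega> u * \<bar>V f0 u - real b\<bar>) = 0"
      using f0 x ub by (auto simp: V_def)
  qed
  then have wl0: "wl S f0 \<Omega> \<le> \<kappa>" using assms(6) by simp
  have part2: "(\<exists>n\<ge>1. wl S (phi n) \<Omega> \<le> \<kappa>) \<and>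
            wl S (phi (stop_index S \<Omega> \<kappa> phi)) \<Omega> \<le> \<kappa> \<and>
            (\<forall>\<psi>. wl S \<psi> \<Omega> \<le> \<kappa> \<longrightarrow> fsize (phi (stop_index S \<Omega> \<kappa> phi)) \<le> fsize \<psi>)"
    if vr: "valid_run S \<Omega> phi" for phi
  proof -
    have key: "wl S (phi (fsize \<psi>)) \<Omega> \<le> \<kappa>" if "wl S \<psi> \<Omega> \<le> \<kappa>" for \<psi>
    proof -
      have "wl S (phi (fsize \<psi>)) \<Omega> \<le> wl S \<psi> \<Omega>"
        using vr fsize_pos[of \<psi>] unfolding valid_run_def by simp
      then show ?thesis using that by linarith
    qed
    have ex: "\<exists>n\<ge>1. wl S (phi n) \<Omega> \<le> \<kappa>"
      using key[OF wl0] fsize_pos[of f0] by (intro exI[of _ "fsize f0"]) simp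
    let ?m = "stop_index S \<Omega> \<kappa> phi"
    have m: "?m \<ge> 1 \<and> wl S (phi ?m) \<Omega> \<le> \<kappa>"
      unfolding stop_index_def using ex by (rule LeastI_ex)
    have fm: "fsize (phi ?m) = ?m" using vr m unfolding valid_run_def by simp
    have le: "fsize (phi ?m) \<le> fsize \<psi>" if "wl S \<psi> \<Omega> \<le> \<kappa>" for \<psi>
    proof -
      have "?m \<le> fsize \<psi>"
        unfolding stop_index_def using key[OF that] fsize_pos[of \<psi>] by (intro Least_le) simp
      then show ?thesis using fm by simp
    qed
    show ?thesis using ex m le by simp
  qed
  show ?thesis using part1 part2 by simp
qed

end
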